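(* In the static load balancing game described in the context, the price of anarchy satisfies $$\mathrm{PoA}\le 1+2\left(\max_{j\in[m]}\frac{s_j^0}{\mu_j}+\frac{\sum_{i=1}^n\lambda_i}{\mu_{\min}}\right)\left(\frac{\sum_{j=1}^m\mu_j}{\sum_{i=1}^n\lambda_i}\right),$$ where $\mu_{\min}=\min_{j}\mu_j$.
   Context: Static load balancing game: there are $m$ servers $[m]$ with service rates $\mu_j>0$ and initial loads $s_j^0\ge 0$, and $n$ players $[n]$; player $i$ holds a job of length $\lambda_i>0$. Player $i$'s action set is $A_i=\{a_i=(a_{i1},\dots,a_{im}):\sum_j a_{ij}=1,\ a_{ij}\ge0\}$. The cost of player $i$ under profile $a$ is $$D_i(a)=\sum_{j=1}^m \lambda_i a_{ij}\left(\frac{\lambda_i a_{ij}}{2\mu_j}+\frac{s_j^0+\sum_{k\neq i}\lambda_k a_{kj}}{\mu_j}\right).$$ A pure Nash equilibrium (NE) is a profile $a$ with $D_i(a_i,a_{-i})\le D_i(a_i',a_{-i})$ for all $i$ and $a_i'\in A_i$. The price of anarchy is $$\mathrm{PoA}=\frac{\max_{a\in \mathrm{NE}}\sum_{i=1}^n D_i(a)}{\min_{a}\sum_{i=1}^n D_i(a)},$$ the maximum being over pure Nash equilibria and the minimum over all action profiles. *)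

theory Defs
  imports Complex_Main
begin

text \<open>Servers are indexed by j < m, players by i < n. A profile is
  a :: nat \<Rightarrow> nat \<Rightarrow> real with a i j the fraction of player i's job sent to server j.\<close>

definition is_action :: "nat \<Rightarrow> (nat \<Rightarrow> real) \<Rightarrow> bool" where
  "is_action m x \<longleftrightarrow> (\<forall>j<m. x j \<ge> 0) \<and> (\<Sum>j<m. x j) = 1"

definition is_profile :: "nat \<Rightarrow> nat \<Rightarrow> (nat \<Rightarrow> nat \<Rightarrow> real) \<Rightarrow> bool" where
  "is_profile n m a \<longleftrightarrow> (\<forall>i<n. is_action m (a i))"

definition cost ::
  "nat \<Rightarrow> nat \<Rightarrow> (nat \<Rightarrow> real) \<Rightarrow> (nat \<Rightarrow> real) \<Rightarrow> (nat \<Rightarrow> real)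
    \<Rightarrow> (nat \<Rightarrow> nat \<Rightarrow> real) \<Rightarrow> nat \<Rightarrow> real" where
  "cost n m mu s0 lam a i =
     (\<Sum>j<m. lam i * a i j * (lam i * a i j / (2 * mu j)
        + (s0 j + (\<Sum>k\<in>{..<n} - {i}. lam k * a k j)) / mu j))"

definition social_cost ::
  "nat \<Rightarrow> nat \<Rightarrow> (nat \<Rightarrow> real) \<Rightarrow> (nat \<Rightarrow> real) \<Rightarrow> (nat \<Rightarrow> real)
    \<Rightarrow> (nat \<Rightarrow> nat \<Rightarrow> real) \<Rightarrow> real" where
  "social_cost n m mu s0 lam a = (\<Sum>i<n. cost n m mu s0 lam a i)"

definition is_NE ::
  "nat \<Rightarrow> nat \<Rightarrow> (nat \<Rightarrow> real) \<Rightarrow> (nat \<Rightarrow> real) \<Rightarrow> (nat \<Rightarrow> real)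
    \<Rightarrow> (nat \<Rightarrow> nat \<Rightarrow> real) \<Rightarrow> bool" where
  "is_NE n m mu s0 lam a \<longleftrightarrow> is_profile n m a \<and>
     (\<forall>i<n. \<forall>x. is_action m x \<longrightarrow>
        cost n m mu s0 lam a i \<le> cost n m mu s0 lam (a(i := x)) i)"

definition PoA ::
  "nat \<Rightarrow> nat \<Rightarrow> (nat \<Rightarrow> real) \<Rightarrow> (nat \<Rightarrow> real) \<Rightarrow> (nat \<Rightarrow> real) \<Rightarrow> real" where
  "PoA n m mu s0 lam =
     (SUP a\<in>{a. is_NE n m mu s0 lam a}. social_cost n m mu s0 lam a)
     / (INF a\<in>{a. is_profile n m a}. social_cost n m mu s0 lam a)"

end

theory Submission
  imports Defs "HOL-Analysis.Analysis"
begin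


definition Lj :: "nat \<Rightarrow> (nat \<Rightarrow> real) \<Rightarrow> (nat \<Rightarrow> nat \<Rightarrow> real) \<Rightarrow> nat \<Rightarrow> real" where
  "Lj n lam a j = (\<Sum>k<n. lam k * a k j)"

definition pot where
  "pot n m mu s0 lam a = (\<Sum>j<m. (s0 j * Lj n lam a j + (Lj n lam a j)^2/2) / mu j)"

lemma Lj_split: "i < n \<Longrightarrow> Lj n lam a j = lam i * a i j + (\<Sum>k\<in>{..<n} - {i}. lam k * a k j)"
  unfolding Lj_def by (simp add: sum.remove)

lemma pot_cost:
  assumes "i < n" "\<forall>j<m. mu j > 0"
  shows "pot n m mu s0 lam a = cost n m mu s0 lam a i +
     (\<Sum>j<m. (s0 j * (\<Sum>k\<in>{..<n} - {i}. lam k * a k j) + (\<Sum>k\<in>{..<n} - {i}. lam k * a k j)^2/2) / mu j)"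
  unfolding pot_def cost_def sum.distrib[symmetric]
proof (rule sum.cong[OF refl])
  fix j assume "j \<in> {..<m}"
  then have "mu j > 0" using assms by auto
  then show "(s0 j * Lj n lam a j + (Lj n lam a j)^2/2) / mu j = 
    lam i * a i j * (lam i * a i j / (2 * mu j) + (s0 j + (\<Sum>k\<in>{..<n} - {i}. lam k * a k j)) / mu j) +
    (s0 j * (\<Sum>k\<in>{..<n} - {i}. lam k * a k j) + (\<Sum>k\<in>{..<n} - {i}. lam k * a k j)^2/2) / mu j"
    unfolding Lj_split[OF assms(1)] by (simp add: field_simps power2_eq_square)
qed



lemma compact_PiE_UNIV:
  fixes S :: "'a \<Rightarrow> 'b::topological_space set"
  shows "(\<And>i. compact (S i)) \<Longrightarrow> compact (PiE UNIV S)"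
  using compactin_PiE[of "\<lambda>i. euclidean" UNIV S] by (simp add: euclidean_product_topology)

lemma cont_eval2 [continuous_intros]:
  "continuous_on S (\<lambda>a::nat \<Rightarrow> nat \<Rightarrow> real. a i j)"
  by (rule continuous_on_subset[OF continuous_on_product_then_coordinatewise[OF continuous_on_product_coordinates]]) auto

definition Kset :: "nat \<Rightarrow> nat \<Rightarrow> (nat \<Rightarrow> nat \<Rightarrow> real) set" where
  "Kset n m = PiE UNIV (\<lambda>i. if i < n then PiE UNIV (\<lambda>j. if j < m then {0..1} else {0}) else {\<lambda>_. 0})
     \<inter> (\<Inter>i\<in>{..<n}. {a. (\<Sum>j<m. a i j) = 1})"

lemma Kset_compact: "compact (Kset n m)"
  unfolding Kset_def
proof (rule compact_Int_closed)
  show "compact (PiE UNIV (\<lambda>i. if i < n then PiE UNIV (\<lambda>j. if j < m then {0..1::real} else {0}) else {\<lambda>_. 0}))"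
    by (intro compact_PiE_UNIV) (auto intro: compact_PiE_UNIV)
  show "closed (\<Inter>i\<in>{..<n}. {a::nat\<Rightarrow>nat\<Rightarrow>real. (\<Sum>j<m. a i j) = 1})"
    by (intro closed_INT ballI closed_Collect_eq continuous_intros)
qed

lemma Kset_ne: "m \<ge> 1 \<Longrightarrow> (\<lambda>i j. if i < n \<and> j = 0 then 1 else 0) \<in> Kset n m"
  unfolding Kset_def by (auto simp: PiE_iff)

lemma Kset_mem: "a \<in> Kset n m \<Longrightarrow> i < n \<Longrightarrow> j < m \<Longrightarrow> 0 \<le> a i j \<and> a i j \<le> 1"
proof -
  assume a: "a \<in> Kset n m" and ij: "i < n" "j < m"
  have "a i \<in> (if i < n then PiE UNIV (\<lambda>j. if j < m then {0..1::real} else {0}) else {\<lambda>_. 0})"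
    by (rule PiE_mem[OF IntD1[OF a[unfolded Kset_def]]]) simp
  then have "a i \<in> PiE UNIV (\<lambda>j. if j < m then {0..1::real} else {0})" using ij by simp
  then have "a i j \<in> (if j < m then {0..1::real} else {0})" by (rule PiE_mem) simp
  then show ?thesis using ij by simp
qed

lemma Kset_sum: "a \<in> Kset n m \<Longrightarrow> i < n \<Longrightarrow> (\<Sum>j<m. a i j) = 1"
  unfolding Kset_def by auto

lemma pot_cont: "\<forall>j<m. mu j > 0 \<Longrightarrow> continuous_on S (pot n m mu s0 lam)"
  unfolding pot_def Lj_def
  by (intro continuous_intros) auto



lemma cost_cong:
  assumes "\<And>j. j < m \<Longrightarrow> b i j = a i j" "\<And>k. k \<noteq> i \<Longrightarrow> b k = a k"
  shows "cost n m mu s0 lam b i = cost n m mu s0 lam a i"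
  unfolding cost_def using assms by (intro sum.cong) auto

lemma NE_exists:
  assumes "m \<ge> 1" "\<forall>j<m. mu j > 0"
  shows "\<exists>a. is_NE n m mu s0 lam a"
proof -
  obtain a where aK: "a \<in> Kset n m" and amin: "\<And>b. b \<in> Kset n m \<Longrightarrow> pot n m mu s0 lam a \<le> pot n m mu s0 lam b"
    using continuous_attains_inf[OF Kset_compact[of n m] _ pot_cont[OF assms(2), of "Kset n m" n s0 lam]]
      Kset_ne[OF assms(1)] by blast
  have "is_NE n m mu s0 lam a"
    unfolding is_NE_def is_profile_def
  proof (intro conjI allI impI)
    fix i assume "i < n"
    then show "is_action m (a i)" unfolding is_action_def using Kset_mem[OF aK] Kset_sum[OF aK] by auto
  next
    fix i x assume i: "i < n" and x: "is_action m x"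
    define x' where "x' = (\<lambda>j. if j < m then x j else 0)"
    define b where "b = a(i := x')"
    have x1: "x j \<le> 1" if "j < m" for j
    proof -
      have "x j \<le> (\<Sum>j<m. x j)" using x that unfolding is_action_def
        by (intro member_le_sum) auto
      then show ?thesis using x unfolding is_action_def by simp
    qed
    have bK: "b \<in> Kset n m"
    proof -
      have aP: "a \<in> PiE UNIV (\<lambda>i. if i < n then PiE UNIV (\<lambda>j. if j < m then {0..1} else {0}) else {\<lambda>_. 0})"
        using aK unfolding Kset_def by blast
      have "b k \<in> (if k < n then PiE UNIV (\<lambda>j. if j < m then {0..1::real} else {0}) else {\<lambda>_. 0})" for k
      proof (cases "k = i")
        case True
        have "x' \<in> PiE UNIV (\<lambda>j. if j < m then {0..1::real} else {0})"
          unfolding PiE_UNIV_domain using x x1 by (auto simp: x'_def is_action_def)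
        then show ?thesis using True i by (simp add: b_def)
      next
        case False
        then show ?thesis unfolding b_def using PiE_mem[OF aP, of k] by simp
      qed
      then have "b \<in> PiE UNIV (\<lambda>i. if i < n then PiE UNIV (\<lambda>j. if j < m then {0..1} else {0}) else {\<lambda>_. 0})"
        unfolding PiE_UNIV_domain by blast
      moreover have "b \<in> (\<Inter>i\<in>{..<n}. {a. (\<Sum>j<m. a i j) = 1})"
        using aK x unfolding Kset_def b_def x'_def is_action_def by auto
      ultimately show ?thesis unfolding Kset_def by blast
    qed
    have R: "(\<Sum>k\<in>{..<n} - {i}. lam k * b k j) = (\<Sum>k\<in>{..<n} - {i}. lam k * a k j)" for j
      unfolding b_def by (intro sum.cong) auto
    have "pot n m mu s0 lam a \<le> pot n m mu s0 lam b" using amin[OF bK] .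
    then have "cost n m mu s0 lam a i \<le> cost n m mu s0 lam b i"
      unfolding pot_cost[OF i assms(2), of s0 lam a] pot_cost[OF i assms(2), of s0 lam b] R by simp
    also have "cost n m mu s0 lam b i = cost n m mu s0 lam (a(i := x)) i"
      by (rule cost_cong) (auto simp: b_def x'_def)
    finally show "cost n m mu s0 lam a i \<le> cost n m mu s0 lam (a(i := x)) i" .
  qed
  then show ?thesis by blast
qed



lemma CS:
  fixes L mu :: "nat \<Rightarrow> real"
  assumes "\<forall>j<m. mu j > 0" "(\<Sum>j<m. mu j) > 0"
  shows "(\<Sum>j<m. L j)^2 / (\<Sum>j<m. mu j) \<le> (\<Sum>j<m. L j^2 / mu j)"
proof -
  define M where "M = (\<Sum>j<m. mu j)"
  define A where "A = (\<Sum>j<m. L j)"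
  define t where "t = A / M"
  have "0 \<le> (\<Sum>j<m. (L j - t * mu j)^2 / mu j)"
    using assms(1) by (intro sum_nonneg) auto
  also have "\<dots> = (\<Sum>j<m. L j^2 / mu j - 2 * t * L j + t^2 * mu j)"
    using assms(1) by (intro sum.cong) (auto simp: field_simps power2_eq_square)
  also have "\<dots> = (\<Sum>j<m. L j^2 / mu j) - 2 * t * A + t^2 * M"
    unfolding A_def M_def by (simp add: sum.distrib sum_subtractf sum_distrib_left)
  also have "\<dots> = (\<Sum>j<m. L j^2 / mu j) - A^2 / M"
    using assms(2) unfolding t_def M_def by (simp add: field_simps power2_eq_square)
  finally show ?thesis unfolding A_def M_def by simp
qed

lemma action_le1: "is_action m x \<Longrightarrow> j < m \<Longrightarrow> x j \<le> 1"
proof -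
  assume x: "is_action m x" and j: "j < m"
  have "x j \<le> (\<Sum>j<m. x j)" using x j unfolding is_action_def
    by (intro member_le_sum) auto
  then show ?thesis using x unfolding is_action_def by simp
qed

lemma Lj_le:
  assumes "is_profile n m a" "\<forall>i<n. lam i > 0" "j < m"
  shows "Lj n lam a j \<le> (\<Sum>i<n. lam i)"
  unfolding Lj_def
proof (rule sum_mono)
  fix k assume "k \<in> {..<n}"
  then have "is_action m (a k)" "lam k > 0" using assms unfolding is_profile_def by auto
  then show "lam k * a k j \<le> lam k" using action_le1[OF _ assms(3)] by (simp add: mult_le_cancel_left1)
qed

lemma R_nonneg:
  assumes "is_profile n m a" "\<forall>i<n. lam i > 0" "j < m"
  shows "0 \<le> (\<Sum>k\<in>{..<n} - {i}. lam k * a k j)"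
proof (rule sum_nonneg)
  fix k assume "k \<in> {..<n} - {i}"
  then have "0 < lam k" "0 \<le> a k j" using assms unfolding is_profile_def is_action_def by auto
  then show "0 \<le> lam k * a k j" by simp
qed

lemma upper:
  assumes P: "is_profile n m a" and m: "m \<ge> 1" and mu: "\<forall>j<m. mu j > 0"
    and s: "\<forall>j<m. s0 j \<ge> 0" and lam: "\<forall>i<n. lam i > 0"
  shows "social_cost n m mu s0 lam a \<le>
    (\<Sum>i<n. lam i) * (Max ((\<lambda>j. s0 j / mu j) ` {..<m}) + (\<Sum>i<n. lam i) / Min (mu ` {..<m}))"
proof -
  define C where "C = Max ((\<lambda>j. s0 j / mu j) ` {..<m}) + (\<Sum>i<n. lam i) / Min (mu ` {..<m})"
  have Lpos: "0 \<le> (\<Sum>i<n. lam i)" using lam by (intro sum_nonneg) (auto intro: less_imp_le)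
  have mmin: "Min (mu ` {..<m}) > 0" using mu m by (subst Min_gr_iff) (auto simp: lessThan_empty_iff)
  have "cost n m mu s0 lam a i \<le> lam i * C" if i: "i < n" for i
  proof -
    have act: "is_action m (a i)" using P i unfolding is_profile_def by auto
    have "cost n m mu s0 lam a i \<le> (\<Sum>j<m. lam i * a i j * C)"
      unfolding cost_def
    proof (rule sum_mono)
      fix j assume j: "j \<in> {..<m}"
      have muj: "mu j > 0" using mu j by auto
      have x0: "0 \<le> lam i * a i j" using lam i act j unfolding is_action_def
        by (metis lessThan_iff less_imp_le mult_nonneg_nonneg)
      define R where "R = (\<Sum>k\<in>{..<n} - {i}. lam k * a k j)"
      have LjR: "Lj n lam a j = lam i * a i j + R" unfolding R_def by (rule Lj_split[OF i])
      have "lam i * a i j / 2 + R \<le> (\<Sum>i<n. lam i)"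
        using Lj_le[OF P lam, of j] j x0 LjR by auto
      then have "(lam i * a i j / 2 + R) / mu j \<le> (\<Sum>i<n. lam i) / mu j"
        using muj by (simp add: divide_right_mono)
      also have "\<dots> \<le> (\<Sum>i<n. lam i) / Min (mu ` {..<m})"
        using Lpos mmin j muj by (intro divide_left_mono) auto
      finally have A: "(lam i * a i j / 2 + R) / mu j \<le> (\<Sum>i<n. lam i) / Min (mu ` {..<m})" .
      have B: "s0 j / mu j \<le> Max ((\<lambda>j. s0 j / mu j) ` {..<m})"
        using j by (intro Max_ge) auto
      have "lam i * a i j / (2 * mu j) + (s0 j + R) / mu j = s0 j / mu j + (lam i * a i j / 2 + R) / mu j"
        using muj by (simp add: field_simps)
      also have "\<dots> \<le> C" unfolding C_def using A B by linarith
      finally have "lam i * a i j / (2 * mu j) + (s0 j + R) / mu j \<le> C" .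
      then show "lam i * a i j * (lam i * a i j / (2 * mu j) + (s0 j + (\<Sum>k\<in>{..<n} - {i}. lam k * a k j)) / mu j)
          \<le> lam i * a i j * C"
        unfolding R_def[symmetric] using x0 by (intro mult_left_mono)
    qed
    also have "\<dots> = lam i * C * (\<Sum>j<m. a i j)" by (simp add: sum_distrib_left sum_distrib_right mult_ac)
    also have "\<dots> = lam i * C" using act unfolding is_action_def by simp
    finally show ?thesis .
  qed
  then have "social_cost n m mu s0 lam a \<le> (\<Sum>i<n. lam i * C)"
    unfolding social_cost_def by (intro sum_mono) auto
  also have "\<dots> = (\<Sum>i<n. lam i) * C" by (simp add: sum_distrib_right)
  finally show ?thesis unfolding C_def .
qed

lemma lower:
  assumes P: "is_profile n m a" and m: "m \<ge> 1" and mu: "\<forall>j<m. mu j > 0"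
    and s: "\<forall>j<m. s0 j \<ge> 0" and lam: "\<forall>i<n. lam i > 0"
  shows "(\<Sum>i<n. lam i)^2 / (2 * (\<Sum>j<m. mu j)) \<le> social_cost n m mu s0 lam a"
proof -
  have Mpos: "(\<Sum>j<m. mu j) > 0" using mu m by (intro sum_pos) (auto simp: lessThan_empty_iff)
  have "cost n m mu s0 lam a i \<le> cost n m mu s0 lam a i" for i by simp
  have ci: "(\<Sum>j<m. lam i * a i j * Lj n lam a j / (2 * mu j)) \<le> cost n m mu s0 lam a i"
    if i: "i < n" for i
    unfolding cost_def
  proof (rule sum_mono)
    fix j assume j: "j \<in> {..<m}"
    have act: "is_action m (a i)" using P i unfolding is_profile_def by auto
    have muj: "mu j > 0" using mu j by auto
    have x0: "0 \<le> lam i * a i j" using lam i act j unfolding is_action_def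
      by (metis lessThan_iff less_imp_le mult_nonneg_nonneg)
    define R where "R = (\<Sum>k\<in>{..<n} - {i}. lam k * a k j)"
    have R0: "0 \<le> R" unfolding R_def using R_nonneg[OF P lam] j by auto
    have LjR: "Lj n lam a j = lam i * a i j + R" unfolding R_def by (rule Lj_split[OF i])
    have s0j: "0 \<le> s0 j" using s j by auto
    have "Lj n lam a j / (2 * mu j) \<le> lam i * a i j / (2 * mu j) + (s0 j + R) / mu j"
      unfolding LjR using muj R0 s0j by (simp add: field_simps)
    then have "lam i * a i j * (Lj n lam a j / (2 * mu j)) \<le> lam i * a i j * (lam i * a i j / (2 * mu j) + (s0 j + R) / mu j)"
      using x0 by (rule mult_left_mono)
    then show "lam i * a i j * Lj n lam a j / (2 * mu j) \<le>
        lam i * a i j * (lam i * a i j / (2 * mu j) + (s0 j + (\<Sum>k\<in>{..<n} - {i}. lam k * a k j)) / mu j)"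
      unfolding R_def by simp
  qed
  have sumL: "(\<Sum>j<m. Lj n lam a j) = (\<Sum>i<n. lam i)"
  proof -
    have "(\<Sum>j<m. Lj n lam a j) = (\<Sum>i<n. lam i * (\<Sum>j<m. a i j))"
      unfolding Lj_def by (simp add: sum.swap[of _ "{..<m}"] sum_distrib_left)
    also have "\<dots> = (\<Sum>i<n. lam i)" using P unfolding is_profile_def is_action_def by simp
    finally show ?thesis .
  qed
  have "(\<Sum>i<n. lam i)^2 / (2 * (\<Sum>j<m. mu j)) = (\<Sum>j<m. Lj n lam a j)^2 / (\<Sum>j<m. mu j) / 2"
    unfolding sumL by simp
  also have "\<dots> \<le> (\<Sum>j<m. (Lj n lam a j)^2 / mu j) / 2"
    using CS[OF mu Mpos] by (simp add: divide_right_mono)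
  also have "\<dots> = (\<Sum>j<m. (\<Sum>i<n. lam i * a i j) * Lj n lam a j / (2 * mu j))"
    by (simp add: sum_divide_distrib Lj_def power2_eq_square mult.commute)
  also have "\<dots> = (\<Sum>i<n. \<Sum>j<m. lam i * a i j * Lj n lam a j / (2 * mu j))"
    by (simp add: sum_distrib_right sum_divide_distrib sum.swap[of _ "{..<m}"])
  also have "\<dots> \<le> social_cost n m mu s0 lam a"
    unfolding social_cost_def using ci by (intro sum_mono) auto
  finally show ?thesis .
qed


theorem theorem3:
  fixes n m :: nat and mu s0 lam :: "nat \<Rightarrow> real"
  assumes "n \<ge> 1" and "m \<ge> 1"
    and "\<forall>j<m. mu j > 0" and "\<forall>j<m. s0 j \<ge> 0" and "\<forall>i<n. lam i > 0"
  shows "PoA n m mu s0 lam \<le>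
     1 + 2 * (Max ((\<lambda>j. s0 j / mu j) ` {..<m}) + (\<Sum>i<n. lam i) / Min (mu ` {..<m}))
         * ((\<Sum>j<m. mu j) / (\<Sum>i<n. lam i))"
proof -
  define C where "C = Max ((\<lambda>j. s0 j / mu j) ` {..<m}) + (\<Sum>i<n. lam i) / Min (mu ` {..<m})"
  define Lam where "Lam = (\<Sum>i<n. lam i)"
  define M where "M = (\<Sum>j<m. mu j)"
  define U where "U = Lam * C"
  define Lo where "Lo = Lam^2 / (2 * M)"
  define Sp where "Sp = (SUP a\<in>{a. is_NE n m mu s0 lam a}. social_cost n m mu s0 lam a)"
  define If where "If = (INF a\<in>{a. is_profile n m a}. social_cost n m mu s0 lam a)"
  have Lampos: "Lam > 0" unfolding Lam_def using assms(1,5) by (intro sum_pos) (auto simp: lessThan_empty_iff)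
  have Mpos: "M > 0" unfolding M_def using assms(2,3) by (intro sum_pos) (auto simp: lessThan_empty_iff)
  have mmin: "Min (mu ` {..<m}) > 0" using assms(2,3) by (subst Min_gr_iff) (auto simp: lessThan_empty_iff)
  have "s0 0 / mu 0 \<le> Max ((\<lambda>j. s0 j / mu j) ` {..<m})" using assms(2) by (intro Max_ge) auto
  moreover have "0 \<le> s0 0 / mu 0" using assms(2,3,4) by auto
  ultimately have C0: "C \<ge> 0" unfolding C_def using Lampos mmin Lam_def by (smt (verit) divide_nonneg_pos)
  have U0: "U \<ge> 0" unfolding U_def using C0 Lampos by simp
  have Lopos: "Lo > 0" unfolding Lo_def using Lampos Mpos by simp
  obtain a0 where "is_NE n m mu s0 lam a0" using NE_exists[OF assms(2,3)] by blast
  have Sp: "Sp \<le> U" unfolding Sp_def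
  proof (rule cSUP_least)
    show "{a. is_NE n m mu s0 lam a} \<noteq> {}" using \<open>is_NE n m mu s0 lam a0\<close> by blast
    fix a assume "a \<in> {a. is_NE n m mu s0 lam a}"
    then have "is_profile n m a" unfolding is_NE_def by simp
    then show "social_cost n m mu s0 lam a \<le> U"
      using upper[OF _ assms(2-5)] unfolding U_def Lam_def C_def by blast
  qed
  have pr: "is_profile n m (\<lambda>i j. if j = 0 then 1 else 0)"
    unfolding is_profile_def is_action_def using assms(2) by simp
  have If: "Lo \<le> If" unfolding If_def
  proof (rule cINF_greatest)
    show "{a. is_profile n m a} \<noteq> {}" using pr by blast
    fix a assume "a \<in> {a. is_profile n m a}"
    then show "Lo \<le> social_cost n m mu s0 lam a"
      using lower[OF _ assms(2-5)] unfolding Lo_def Lam_def M_def by blast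
  qed
  have "PoA n m mu s0 lam = Sp / If" unfolding PoA_def Sp_def If_def ..
  also have "\<dots> \<le> U / If" using Sp If Lopos by (intro divide_right_mono) auto
  also have "\<dots> \<le> U / Lo" using U0 If Lopos by (intro divide_left_mono) auto
  also have "\<dots> = 2 * C * (M / Lam)" unfolding U_def Lo_def using Lampos Mpos
    by (simp add: field_simps power2_eq_square)
  also have "\<dots> \<le> 1 + 2 * C * (M / Lam)" by simp
  finally show ?thesis unfolding C_def M_def Lam_def .
qed

end
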